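(* Let $S$ be a UFD and let $F,F'$ be nonzero elements of $S\setminus U(S)$. For $C\in\{0\}\cup U(S)$ write $F-C=F_{C,0}F_{C,1}^{E(C,1)}\cdots F_{C,Q(C)}^{E(C,Q(C))}$ with $F_{C,0}\in U(S)$, integers $1\le E(C,1)\le\dots\le E(C,Q(C))$, and pairwise coprime irreducible $F_{C,1},\dots,F_{C,Q(C)}\in S\setminus U(S)$; let $F'-C=F'_{C,0}F'^{E'(C,1)}_{C,1}\cdots F'^{E'(C,Q'(C))}_{C,Q'(C)}$ be the corresponding factorization of $F'-C$. Assume there is a ring isomorphism $\Delta:S[1/F]\to S[1/F']$ with $\Delta(U(S))=U(S)$. Then (i) $Q(0)=Q'(0)$; and (ii) if $F$ and $F'$ are irreducible in $S$, there exists a bijection $\Theta:U(S)\to U(S)$ such that for all $C\in U(S)$ we have $Q(C)=Q'(\Theta(C))$ and $E(C,i)=E'(\Theta(C),i)$ for $1\le i\le Q(C)$.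
   Context: $U(S)$ denotes the group of units of $S$. *)

theory Defs
  imports "HOL-Computational_Algebra.Factorial_Ring" "HOL-Computational_Algebra.Fraction_Field"
begin

text \<open>The UFD S is a type 'a of class {factorial_semiring, idom}.
  U(S) = {c. is_unit c}. S is embedded into its fraction field via (\<lambda>a. Fract a 1).\<close>

definition units_S :: "'a::{factorial_semiring,idom} set" where
  "units_S = {c. is_unit c}"

definition localization :: "'a::{factorial_semiring,idom} \<Rightarrow> 'a fract set" where
  "localization F = {Fract a (F ^ n) | a n. True}"

definition ring_iso_on :: "('a::comm_ring_1 \<Rightarrow> 'b::comm_ring_1) \<Rightarrow> 'a set \<Rightarrow> 'b set \<Rightarrow> bool" where
  "ring_iso_on D A B \<longleftrightarrow> bij_betw D A B \<and> D 1 = 1 \<and>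
     (\<forall>x\<in>A. \<forall>y\<in>A. D (x + y) = D x + D y \<and> D (x * y) = D x * D y)"

definition nfactors :: "'a::{factorial_semiring,idom} \<Rightarrow> nat" where
  "nfactors x = card (prime_factors x)"

text \<open>E(x,1) \<le> ... \<le> E(x,Q(x)): the sorted list of exponents; E(x,i) = exps x ! (i-1).\<close>
definition exps :: "'a::{factorial_semiring,idom} \<Rightarrow> nat list" where
  "exps x = sorted_list_of_multiset
      (image_mset (\<lambda>p. multiplicity p x) (mset_set (prime_factors x)))"

end

theory Submission
  imports Defs "HOL-Computational_Algebra.Primes"
begin

definition subr :: "'b::comm_ring_1 set \<Rightarrow> bool" where
  "subr A \<longleftrightarrow> 1 \<in> A \<and> 0 \<in> A \<and> (\<forall>x\<in>A. \<forall>y\<in>A. x + y \<in> A \<and> x * y \<in> A \<and> - x \<in> A)"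

definition unitR :: "'b::comm_ring_1 set \<Rightarrow> 'b \<Rightarrow> bool" where
  "unitR A x \<longleftrightarrow> x \<in> A \<and> (\<exists>y\<in>A. x * y = 1)"

definition dvdR :: "'b::comm_ring_1 set \<Rightarrow> 'b \<Rightarrow> 'b \<Rightarrow> bool" where
  "dvdR A a b \<longleftrightarrow> (\<exists>r\<in>A. b = a * r)"

definition irrR :: "'b::comm_ring_1 set \<Rightarrow> 'b \<Rightarrow> bool" where
  "irrR A a \<longleftrightarrow> a \<in> A \<and> a \<noteq> 0 \<and> \<not> unitR A a \<and>
     (\<forall>b\<in>A. \<forall>c\<in>A. a = b * c \<longrightarrow> unitR A b \<or> unitR A c)"

lemma subrD:
  assumes "subr A"
  shows "1 \<in> A" "0 \<in> A" "x \<in> A \<Longrightarrow> y \<in> A \<Longrightarrow> x + y \<in> A"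
    "x \<in> A \<Longrightarrow> y \<in> A \<Longrightarrow> x * y \<in> A" "x \<in> A \<Longrightarrow> - x \<in> A"
    "x \<in> A \<Longrightarrow> y \<in> A \<Longrightarrow> x - y \<in> A"
    "x \<in> A \<Longrightarrow> x ^ n \<in> A"
proof -
  show "1 \<in> A" "0 \<in> A" "x \<in> A \<Longrightarrow> y \<in> A \<Longrightarrow> x + y \<in> A"
    "x \<in> A \<Longrightarrow> y \<in> A \<Longrightarrow> x * y \<in> A" "x \<in> A \<Longrightarrow> - x \<in> A"
    using assms unfolding subr_def by auto
  show "x \<in> A \<Longrightarrow> y \<in> A \<Longrightarrow> x - y \<in> A"
    using assms unfolding subr_def by (metis diff_conv_add_uminus)
  show "x \<in> A \<Longrightarrow> x ^ n \<in> A"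
    using assms unfolding subr_def by (induction n) auto
qed

locale riso =
  fixes D :: "'b::comm_ring_1 \<Rightarrow> 'c::comm_ring_1" and A B
  assumes iso: "ring_iso_on D A B" and sA: "subr A" and sB: "subr B"
begin

lemma bij: "bij_betw D A B" using iso unfolding ring_iso_on_def by auto
lemma one: "D 1 = 1" using iso unfolding ring_iso_on_def by auto
lemma add: "x \<in> A \<Longrightarrow> y \<in> A \<Longrightarrow> D (x + y) = D x + D y"
  using iso unfolding ring_iso_on_def by auto
lemma mult: "x \<in> A \<Longrightarrow> y \<in> A \<Longrightarrow> D (x * y) = D x * D y"
  using iso unfolding ring_iso_on_def by auto
lemma mem: "x \<in> A \<Longrightarrow> D x \<in> B" using bij bij_betwE by blast
lemma inj: "x \<in> A \<Longrightarrow> y \<in> A \<Longrightarrow> D x = D y \<Longrightarrow> x = y"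
  using bij unfolding bij_betw_def inj_on_def by blast
lemma surj: "y \<in> B \<Longrightarrow> \<exists>x\<in>A. y = D x"
  using bij by (metis bij_betw_imp_surj_on imageE)
lemma zero: "D 0 = 0"
proof -
  have "D (0 + 0) = D 0 + D 0" using add subrD(2)[OF sA] by blast
  thus ?thesis by simp
qed
lemma minus: "x \<in> A \<Longrightarrow> D (- x) = - D x"
proof -
  assume x: "x \<in> A"
  have "D (x + - x) = D x + D (- x)" using add x subrD(5)[OF sA] by blast
  thus ?thesis using zero by (metis add.commute eq_neg_iff_add_eq_0)
qed
lemma diff: "x \<in> A \<Longrightarrow> y \<in> A \<Longrightarrow> D (x - y) = D x - D y"
  using add[of x "-y"] minus[of y] subrD[OF sA] by simp
lemma power: "x \<in> A \<Longrightarrow> D (x ^ n) = D x ^ n"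
  by (induction n) (auto simp: one mult subrD[OF sA])

lemma unit: "unitR A x \<Longrightarrow> unitR B (D x)"
  unfolding unitR_def using mem mult one by metis
lemma dvd: "a \<in> A \<Longrightarrow> dvdR A a b \<Longrightarrow> dvdR B (D a) (D b)"
  unfolding dvdR_def using mem mult by metis

lemma inv_iso: "ring_iso_on (inv_into A D) B A"
proof -
  let ?E = "inv_into A D"
  have b: "bij_betw ?E B A" using bij bij_betw_inv_into by blast
  have E: "y \<in> B \<Longrightarrow> ?E y \<in> A \<and> D (?E y) = y" for y
    using bij by (metis bij_betw_imp_surj_on f_inv_into_f inv_into_into)
  have EA: "x \<in> A \<Longrightarrow> ?E (D x) = x" for x
    using bij bij_betw_inv_into_left by fastforce
  have "?E 1 = 1" using EA[of 1] one subrD(1)[OF sA] by simp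
  moreover have "?E (x + y) = ?E x + ?E y \<and> ?E (x * y) = ?E x * ?E y" if "x \<in> B" "y \<in> B" for x y
  proof -
    have "x + y = D (?E x + ?E y)" "x * y = D (?E x * ?E y)"
      using E that add mult by auto
    thus ?thesis using EA E that subrD[OF sA] by metis
  qed
  ultimately show ?thesis using b unfolding ring_iso_on_def by auto
qed

lemma inv_riso: "riso (inv_into A D) B A"
  using inv_iso sA sB by (simp add: riso_def)

lemma invE: "y \<in> B \<Longrightarrow> inv_into A D y \<in> A \<and> D (inv_into A D y) = y"
  using bij by (metis bij_betw_imp_surj_on f_inv_into_f inv_into_into)
lemma invA: "x \<in> A \<Longrightarrow> inv_into A D (D x) = x"
  using bij bij_betw_inv_into_left by fastforce

lemma unit_iff: "x \<in> A \<Longrightarrow> unitR B (D x) \<longleftrightarrow> unitR A x"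
  using unit riso.unit[OF inv_riso] invA by metis

lemma irr: "irrR A a \<Longrightarrow> irrR B (D a)"
proof -
  assume a: "irrR A a"
  hence aA: "a \<in> A" and a0: "a \<noteq> 0" and au: "\<not> unitR A a" and ai: "\<forall>b\<in>A. \<forall>c\<in>A. a = b * c \<longrightarrow> unitR A b \<or> unitR A c"
    unfolding irrR_def by auto
  have "D a \<noteq> 0" using inj[OF aA subrD(2)[OF sA]] zero a0 by auto
  moreover have "\<not> unitR B (D a)" using unit_iff aA au by blast
  moreover have "unitR B b \<or> unitR B c" if bB: "b \<in> B" and cB: "c \<in> B" and bc: "D a = b * c" for b c
  proof -
    obtain b' c' where "b' \<in> A" "c' \<in> A" "b = D b'" "c = D c'" using surj bB cB by blast
    hence "D a = D (b' * c')" using bc mult by simp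
    hence "a = b' * c'" using inj aA subrD[OF sA] \<open>b' \<in> A\<close> \<open>c' \<in> A\<close> by metis
    hence "unitR A b' \<or> unitR A c'" using ai \<open>b' \<in> A\<close> \<open>c' \<in> A\<close> by blast
    thus ?thesis using unit \<open>b = D b'\<close> \<open>c = D c'\<close> by blast
  qed
  ultimately show ?thesis unfolding irrR_def using mem aA by blast
qed

end



lemma loc_iff: "x \<in> localization F \<longleftrightarrow> (\<exists>a n. x = Fract a (F ^ n))"
  by (auto simp: localization_def)

lemma loc_mem: "Fract a (F ^ n) \<in> localization F"
  by (auto simp: localization_def)

lemma loc_const: "Fract c 1 \<in> localization F"
  using loc_mem[of c F 0] by simp

lemma subr_loc:
  fixes F :: "'a::{factorial_semiring,idom}"
  assumes F: "F \<noteq> 0"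
  shows "subr (localization F)"
proof -
  have "1 \<in> localization F" using loc_const[of 1 F] by (simp add: One_fract_def)
  moreover have "0 \<in> localization F" using loc_const[of 0 F] by (simp add: Zero_fract_def)
  moreover have "x + y \<in> localization F \<and> x * y \<in> localization F \<and> - x \<in> localization F"
    if xL: "x \<in> localization F" and yL: "y \<in> localization F" for x y
  proof -
    obtain a n where x: "x = Fract a (F ^ n)" using xL unfolding loc_iff by blast
    obtain b m where y: "y = Fract b (F ^ m)" using yL unfolding loc_iff by blast
    have e1: "x + y = Fract (a * F ^ m + b * F ^ n) (F ^ (n + m))"
      using F by (simp add: x y power_add)
    have e2: "x * y = Fract (a * b) (F ^ (n + m))"
      by (simp add: x y power_add)
    have e3: "- x = Fract (- a) (F ^ n)" by (simp add: x)
    show ?thesis unfolding e1 e2 e3 by (intro conjI loc_mem)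
  qed
  ultimately show ?thesis unfolding subr_def by blast
qed

lemma unit_loc:
  fixes F :: "'a::{factorial_semiring,idom}"
  assumes F: "F \<noteq> 0"
  shows "unitR (localization F) (Fract a (F ^ n)) \<longleftrightarrow> a \<noteq> 0 \<and> (\<exists>m. a dvd F ^ m)"
proof
  assume "unitR (localization F) (Fract a (F ^ n))"
  then obtain y where "y \<in> localization F" "Fract a (F ^ n) * y = 1" unfolding unitR_def by blast
  then obtain b m where "Fract a (F ^ n) * Fract b (F ^ m) = Fract 1 1"
    unfolding loc_iff One_fract_def by blast
  hence "a * b = F ^ n * F ^ m" using F by (simp add: eq_fract)
  hence "a * b = F ^ (n + m)" by (simp add: power_add)
  moreover have "F ^ (n + m) \<noteq> 0" using F by simp
  ultimately show "a \<noteq> 0 \<and> (\<exists>m. a dvd F ^ m)" by (metis dvd_triv_left mult_eq_0_iff)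
next
  assume "a \<noteq> 0 \<and> (\<exists>m. a dvd F ^ m)"
  then obtain m c where c: "F ^ m = a * c" by blast
  have "Fract a (F ^ n) * Fract (c * F ^ n) (F ^ m) = 1"
    using F by (simp add: One_fract_def eq_fract c[symmetric] power_add)
  thus "unitR (localization F) (Fract a (F ^ n))" unfolding unitR_def using loc_mem by blast
qed



definition rep :: "'a::{factorial_semiring,idom} \<Rightarrow> 'a fract \<Rightarrow> 'a \<times> nat" where
  "rep F x = (SOME r. x = Fract (fst r) (F ^ snd r))"

definition Tset :: "'a::{factorial_semiring,idom} \<Rightarrow> 'a fract \<Rightarrow> 'a set" where
  "Tset F x = {p \<in> prime_factors F. odd (multiplicity p (fst (rep F x)) + snd (rep F x) * multiplicity p F)}"

definition simR :: "'a::{factorial_semiring,idom} \<Rightarrow> 'a fract \<Rightarrow> 'a fract \<Rightarrow> bool" where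
  "simR F x y \<longleftrightarrow> (\<exists>c z. is_unit c \<and> unitR (localization F) z \<and> x = Fract c 1 * z ^ 2 * y)"

lemma rep_eq:
  assumes "x \<in> localization F"
  shows "x = Fract (fst (rep F x)) (F ^ snd (rep F x))"
proof -
  obtain a n where "x = Fract a (F ^ n)" using assms unfolding loc_iff by blast
  hence "\<exists>r. x = Fract (fst r) (F ^ snd r)" by (intro exI[of _ "(a, n)"]) simp
  thus ?thesis unfolding rep_def by (rule someI_ex)
qed

lemma mult_prod:
  fixes p :: "'a::{factorial_semiring,idom}"
  assumes "prime p" "a \<noteq> 0" "F \<noteq> 0"
  shows "multiplicity p (a * F ^ n) = multiplicity p a + n * multiplicity p F"
  using assms by (simp add: prime_elem_multiplicity_mult_distrib prime_elem_multiplicity_power_distrib)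

lemma par_well:
  fixes F :: "'a::{factorial_semiring,idom}"
  assumes F: "F \<noteq> 0" and eq: "Fract a (F ^ n) = Fract a' (F ^ n')" and a: "a \<noteq> 0" and p: "prime p"
  shows "odd (multiplicity p a + n * multiplicity p F) \<longleftrightarrow> odd (multiplicity p a' + n' * multiplicity p F)"
proof -
  have e: "a * F ^ n' = a' * F ^ n" using eq F by (simp add: eq_fract)
  hence a': "a' \<noteq> 0" using a F by auto
  have "multiplicity p (a * F ^ n') = multiplicity p (a' * F ^ n)" using e by simp
  hence "multiplicity p a + n' * multiplicity p F = multiplicity p a' + n * multiplicity p F"
    using mult_prod[OF p a F] mult_prod[OF p a' F] by simp
  thus ?thesis by presburger
qed

lemma Tset_eq:
  fixes F :: "'a::{factorial_semiring,idom}"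
  assumes F: "F \<noteq> 0" and u: "unitR (localization F) (Fract a (F ^ n))"
  shows "Tset F (Fract a (F ^ n)) = {p \<in> prime_factors F. odd (multiplicity p a + n * multiplicity p F)}"
proof -
  let ?x = "Fract a (F ^ n)"
  have a: "a \<noteq> 0" using u unit_loc[OF F] by blast
  have eq: "?x = Fract (fst (rep F ?x)) (F ^ snd (rep F ?x))" using rep_eq loc_mem by blast
  show ?thesis unfolding Tset_def using par_well[OF F eq a] by blast
qed

lemma unit_loc_obtain:
  fixes F :: "'a::{factorial_semiring,idom}"
  assumes F: "F \<noteq> 0" and u: "unitR (localization F) x"
  obtains a n m where "x = Fract a (F ^ n)" "a \<noteq> 0" "a dvd F ^ m"
proof -
  obtain a n where x: "x = Fract a (F ^ n)" using u unfolding unitR_def loc_iff by blast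
  thus ?thesis using that u unit_loc[OF F] by blast
qed

lemma simR_Tset:
  fixes F :: "'a::{factorial_semiring,idom}"
  assumes F: "F \<noteq> 0" and ux: "unitR (localization F) x" and uy: "unitR (localization F) y"
    and s: "simR F x y"
  shows "Tset F x = Tset F y"
proof -
  obtain c z where c: "is_unit c" and uz: "unitR (localization F) z" and xe: "x = Fract c 1 * z ^ 2 * y"
    using s unfolding simR_def by blast
  obtain b m k where z: "z = Fract b (F ^ m)" "b \<noteq> 0" "b dvd F ^ k" using unit_loc_obtain[OF F uz] by blast
  obtain a n k' where y: "y = Fract a (F ^ n)" "a \<noteq> 0" "a dvd F ^ k'" using unit_loc_obtain[OF F uy] by blast
  have c0: "c \<noteq> 0" using c by auto
  have xe2: "x = Fract (c * b ^ 2 * a) (F ^ (m + m + n))"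
    using xe z y by (simp add: power2_eq_square power_add mult_ac)
  have "Tset F x = {p \<in> prime_factors F. odd (multiplicity p (c * b ^ 2 * a) + (m + m + n) * multiplicity p F)}"
    using Tset_eq[OF F] ux xe2 by simp
  also have "\<dots> = {p \<in> prime_factors F. odd (multiplicity p a + n * multiplicity p F)}"
  proof (intro Collect_cong conj_cong refl)
    fix p assume "p \<in> prime_factors F"
    hence p: "prime p" by auto
    have "multiplicity p (c * b ^ 2 * a) = 2 * multiplicity p b + multiplicity p a"
      using p c z(2) y(2)
      by (simp add: mult.assoc multiplicity_times_unit_right prime_elem_multiplicity_mult_distrib
          prime_elem_multiplicity_power_distrib)
    thus "odd (multiplicity p (c * b ^ 2 * a) + (m + m + n) * multiplicity p F) =
          odd (multiplicity p a + n * multiplicity p F)" by (simp add: algebra_simps)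
  qed
  also have "\<dots> = Tset F y" using Tset_eq[OF F] uy y(1) by simp
  finally show ?thesis .
qed



lemma not_pf_not_dvd:
  fixes F :: "'a::{factorial_semiring,idom}"
  assumes F: "F \<noteq> 0" and p: "prime p" and np: "p \<notin> prime_factors F" and a: "a dvd F ^ i"
  shows "multiplicity p a = 0"
proof -
  have "\<not> p dvd F" using np F p by (simp add: in_prime_factors_iff)
  hence "\<not> p dvd a" using a p prime_dvd_power dvd_trans by metis
  thus ?thesis by (rule not_dvd_imp_multiplicity_0)
qed

lemma Tset_simR:
  fixes F :: "'a::{factorial_semiring,idom}"
  assumes F: "F \<noteq> 0" and ux: "unitR (localization F) x" and uy: "unitR (localization F) y"
    and T: "Tset F x = Tset F y"
  shows "simR F x y"
proof -
  obtain a n i where x: "x = Fract a (F ^ n)" and a0: "a \<noteq> 0" and ai: "a dvd F ^ i"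
    using unit_loc_obtain[OF F ux] by blast
  obtain b m j where y: "y = Fract b (F ^ m)" and b0: "b \<noteq> 0" and bj: "b dvd F ^ j"
    using unit_loc_obtain[OF F uy] by blast
  define N where "N = a * b * F ^ (n + m)"
  have N0: "N \<noteq> 0" using a0 b0 F by (simp add: N_def)
  have Tx: "Tset F x = {p \<in> prime_factors F. odd (multiplicity p a + n * multiplicity p F)}"
    using Tset_eq[OF F] ux x by simp
  have Ty: "Tset F y = {p \<in> prime_factors F. odd (multiplicity p b + m * multiplicity p F)}"
    using Tset_eq[OF F] uy y by simp
  have ev: "even (multiplicity p N)" if p: "prime p" for p
  proof -
    have mN: "multiplicity p N = multiplicity p a + multiplicity p b + (n + m) * multiplicity p F"
      using p a0 b0 F unfolding N_def
      by (simp add: prime_elem_multiplicity_mult_distrib prime_elem_multiplicity_power_distrib)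
    show ?thesis
    proof (cases "p \<in> prime_factors F")
      case True
      hence "odd (multiplicity p a + n * multiplicity p F) \<longleftrightarrow> odd (multiplicity p b + m * multiplicity p F)"
        using T Tx Ty by blast
      thus ?thesis unfolding mN by (simp add: algebra_simps) presburger
    next
      case False
      have "multiplicity p a = 0" "multiplicity p b = 0" "multiplicity p F = 0"
        using not_pf_not_dvd[OF F p False] ai bj dvd_refl[of F] power_one_right[of F] by metis+
      thus ?thesis unfolding mN by simp
    qed
  qed
  define w where "w = (\<Prod>p\<in>prime_factors N. p ^ (multiplicity p N div 2))"
  have w0: "w \<noteq> 0" unfolding w_def by (auto simp: in_prime_factors_iff)
  have w2e: "w ^ 2 = (\<Prod>p\<in>prime_factors N. p ^ (multiplicity p N div 2 * 2))"
    unfolding w_def by (simp add: prod_power_distrib power_mult)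
  have "multiplicity q (w ^ 2) = multiplicity q N" if q: "prime q" for q
  proof -
    have "multiplicity q (w ^ 2) = (if q \<in> prime_factors N then multiplicity q N div 2 * 2 else 0)"
      unfolding w2e using q by (intro multiplicity_prod_prime_powers) auto
    also have "\<dots> = multiplicity q N"
      using ev[OF q] q N0 by (auto simp: in_prime_factors_iff not_dvd_imp_multiplicity_0)
    finally show ?thesis .
  qed
  hence nw: "normalize (w ^ 2) = normalize N"
    using w0 N0 by (intro multiplicity_eq_imp_eq) auto
  define c where "c = N div w ^ 2"
  have Nwc: "N = w ^ 2 * c" unfolding c_def using associatedD1[OF nw] by simp
  obtain d where "w ^ 2 = N * d" using associatedD2[OF nw] by blast
  hence "w ^ 2 * 1 = w ^ 2 * (c * d)" using Nwc by (simp add: mult_ac)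
  hence "c * d = 1" using w0 by (metis mult_left_cancel power_not_zero)
  hence c: "is_unit c" by (metis dvd_triv_left)
  obtain b' where bb': "F ^ j = b * b'" using bj by blast
  have b'0: "b' \<noteq> 0" using bb' F by auto
  define z where "z = Fract (w * b') (F ^ (n + j))"
  have wN: "w dvd N" using associatedD1[OF nw] dvd_trans[of w "w ^ 2" N] by (simp add: power2_eq_square)
  have "a * b dvd F ^ i * F ^ j" by (rule mult_dvd_mono[OF ai bj])
  hence "a * b * F ^ (n + m) dvd F ^ i * F ^ j * F ^ (n + m)" by (rule mult_dvd_mono) simp
  hence NF: "N dvd F ^ (i + j + (n + m))" unfolding N_def by (simp add: power_add)
  have "w dvd F ^ (i + j + (n + m))" using wN NF by (rule dvd_trans)
  moreover have "b' dvd F ^ j" using bb' by simp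
  ultimately have "w * b' dvd F ^ (i + j + (n + m)) * F ^ j"
    by (rule mult_dvd_mono)
  hence "w * b' dvd F ^ (i + j + (n + m) + j)" by (simp add: power_add)
  hence "\<exists>k. w * b' dvd F ^ k" by blast
  hence uz: "unitR (localization F) z" unfolding z_def unit_loc[OF F] using w0 b'0 by simp
  have key: "a * (1 * (F ^ (n + j)) ^ 2 * F ^ m) = c * (w * b') ^ 2 * b * F ^ n"
  proof -
    have "c * (w * b') ^ 2 * b * F ^ n = (w ^ 2 * c) * b' * (b * b') * F ^ n"
      by (simp add: power2_eq_square mult_ac)
    also have "\<dots> = a * b * F ^ (n + m) * b' * F ^ j * F ^ n"
      using Nwc bb' unfolding N_def by simp
    also have "\<dots> = a * (b * b') * F ^ (n + m) * F ^ j * F ^ n" by (simp add: mult_ac)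
    also have "\<dots> = a * (1 * (F ^ (n + j)) ^ 2 * F ^ m)"
      unfolding bb'[symmetric] by (simp add: power2_eq_square power_add mult_ac)
    finally show ?thesis by simp
  qed
  have "x = Fract c 1 * z ^ 2 * y"
    unfolding x y z_def using F key by (simp add: eq_fract power2_eq_square)
  thus ?thesis unfolding simR_def using c uz by blast
qed



lemma Tset_sub: "Tset F x \<subseteq> prime_factors F" unfolding Tset_def by auto

lemma Tset_image:
  fixes F :: "'a::{factorial_semiring,idom}"
  assumes F: "F \<noteq> 0"
  shows "Tset F ` {x. unitR (localization F) x} = Pow (prime_factors F)"
proof
  show "Tset F ` {x. unitR (localization F) x} \<subseteq> Pow (prime_factors F)" using Tset_sub by blast
next
  show "Pow (prime_factors F) \<subseteq> Tset F ` {x. unitR (localization F) x}"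
  proof
    fix A assume "A \<in> Pow (prime_factors F)"
    hence AP: "A \<subseteq> prime_factors F" by simp
    have fin: "finite A" using AP finite_subset by (metis finite_set_mset)
    have pA: "\<And>p. p \<in> A \<Longrightarrow> prime p" using AP by auto
    define q where "q = (\<Prod>p\<in>A. p ^ (1::nat))"
    have mq: "multiplicity r q = (if r \<in> A then 1 else 0)" if r: "prime r" for r
      unfolding q_def using fin pA r by (rule multiplicity_prod_prime_powers)
    have q0: "q \<noteq> 0" unfolding q_def using fin pA by (metis not_prime_0 power_one_right prod_zero_iff)
    have "q dvd F"
    proof (rule multiplicity_le_imp_dvd[OF q0])
      fix r :: 'a assume r: "prime r"
      show "multiplicity r q \<le> multiplicity r F"
      proof (cases "r \<in> A")
        case True
        hence "r \<in> prime_factors F" using AP by auto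
        hence "multiplicity r F > 0" using prime_factors_multiplicity by blast
        thus ?thesis using mq[OF r] True by simp
      qed (use mq[OF r] in simp)
    qed
    hence "\<exists>k. q dvd F ^ k" by (intro exI[of _ 1]) simp
    hence u: "unitR (localization F) (Fract q (F ^ 0))" unfolding unit_loc[OF F] using q0 by simp
    have "Tset F (Fract q (F ^ 0)) = {p \<in> prime_factors F. odd (multiplicity p q + 0 * multiplicity p F)}"
      using Tset_eq[OF F u] .
    also have "\<dots> = A"
    proof (intro set_eqI iffI)
      fix p assume "p \<in> {p \<in> prime_factors F. odd (multiplicity p q + 0 * multiplicity p F)}"
      hence p: "prime p" "odd (multiplicity p q)" by auto
      thus "p \<in> A" using mq[OF p(1)] by (cases "p \<in> A") auto
    next
      fix p assume pA: "p \<in> A"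
      hence "p \<in> prime_factors F" "prime p" using AP pA by auto
      thus "p \<in> {p \<in> prime_factors F. odd (multiplicity p q + 0 * multiplicity p F)}"
        using mq pA by simp
    qed
    finally show "A \<in> Tset F ` {x. unitR (localization F) x}" using u by force
  qed
qed

lemma card_quot:
  assumes "f ` A = B" "\<And>x y. x \<in> A \<Longrightarrow> y \<in> A \<Longrightarrow> g x = g y \<longleftrightarrow> h (f x) = h (f y)"
  shows "card (g ` A) = card (h ` B)"
proof -
  define \<phi> where "\<phi> t = h (f (inv_into A g t))" for t
  have \<phi>g: "\<phi> (g x) = h (f x)" if "x \<in> A" for x
  proof -
    have "inv_into A g (g x) \<in> A" "g (inv_into A g (g x)) = g x"
      using that by (auto intro: inv_into_into f_inv_into_f)
    thus ?thesis unfolding \<phi>_def using assms(2) that by blast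
  qed
  have "inj_on \<phi> (g ` A)"
  proof (rule inj_onI)
    fix s t assume "s \<in> g ` A" "t \<in> g ` A" "\<phi> s = \<phi> t"
    then obtain x y where "x \<in> A" "y \<in> A" "s = g x" "t = g y" "\<phi> (g x) = \<phi> (g y)" by blast
    thus "s = t" using \<phi>g assms(2) by metis
  qed
  moreover have "\<phi> ` (g ` A) = h ` B" using \<phi>g assms(1) by (auto simp: image_image)
  ultimately show ?thesis by (metis card_image)
qed



lemma simR_transfer:
  fixes F :: "'a::{factorial_semiring,idom}" and F' :: "'a"
  assumes r: "riso D (localization F) (localization F')"
    and cu: "\<And>c. is_unit c \<Longrightarrow> \<exists>c'. is_unit c' \<and> D (Fract c 1) = Fract c' 1"
    and y: "y \<in> localization F" and s: "simR F x y"
  shows "simR F' (D x) (D y)"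
proof -
  interpret riso D "localization F" "localization F'" by (rule r)
  obtain c z where c: "is_unit c" and uz: "unitR (localization F) z" and xe: "x = Fract c 1 * z ^ 2 * y"
    using s unfolding simR_def by blast
  obtain c' where c': "is_unit c'" "D (Fract c 1) = Fract c' 1" using cu[OF c] by blast
  have zL: "z \<in> localization F" using uz unfolding unitR_def by blast
  have cL: "Fract c 1 \<in> localization F" by (rule loc_const)
  have "D x = D (Fract c 1) * D z ^ 2 * D y"
    unfolding xe using zL cL y subrD[OF sA] by (simp add: mult power)
  moreover have "unitR (localization F') (D z)" using unit uz by blast
  ultimately show ?thesis unfolding simR_def using c' by auto
qed

lemma part1:
  fixes F F' :: "'a::{factorial_semiring,idom}" and \<Delta> :: "'a fract \<Rightarrow> 'a fract"
  assumes F: "F \<noteq> 0" and F': "F' \<noteq> 0"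
    and iso: "ring_iso_on \<Delta> (localization F) (localization F')"
    and IM: "\<Delta> ` ((\<lambda>c. Fract c 1) ` units_S) = (\<lambda>c. Fract c 1) ` units_S"
  shows "card (prime_factors F) = card (prime_factors F')"
proof -
  have r: "riso \<Delta> (localization F) (localization F')"
    using iso subr_loc[OF F] subr_loc[OF F'] by (simp add: riso_def)
  interpret riso \<Delta> "localization F" "localization F'" by (rule r)
  define E where "E = inv_into (localization F) \<Delta>"
  have rE: "riso E (localization F') (localization F)" unfolding E_def by (rule inv_riso)
  have cu: "\<exists>c'. is_unit c' \<and> \<Delta> (Fract c 1) = Fract c' 1" if "is_unit c" for c
  proof -
    have "\<Delta> (Fract c 1) \<in> \<Delta> ` ((\<lambda>c. Fract c 1) ` units_S)" using that by (auto simp: units_S_def)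
    thus ?thesis unfolding IM by (auto simp: units_S_def)
  qed
  have cuE: "\<exists>c'. is_unit c' \<and> E (Fract c 1) = Fract c' 1" if "is_unit c" for c
  proof -
    have "Fract c 1 \<in> \<Delta> ` ((\<lambda>c. Fract c 1) ` units_S)" unfolding IM using that by (auto simp: units_S_def)
    then obtain c' where "is_unit c'" "Fract c 1 = \<Delta> (Fract c' 1)" by (auto simp: units_S_def)
    thus ?thesis unfolding E_def using invA[OF loc_const] by auto
  qed
  define U where "U = {x. unitR (localization F) x}"
  define U' where "U' = {x. unitR (localization F') x}"
  have img: "\<Delta> ` U = U'"
  proof
    show "\<Delta> ` U \<subseteq> U'" unfolding U_def U'_def using unit by blast
    show "U' \<subseteq> \<Delta> ` U"
    proof
      fix y assume "y \<in> U'"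
      hence yu: "unitR (localization F') y" and yL: "y \<in> localization F'" unfolding U'_def unitR_def by auto
      obtain x where xL: "x \<in> localization F" and yx: "y = \<Delta> x" using surj[OF yL] by blast
      hence "unitR (localization F) x" using unit_iff yu by blast
      thus "y \<in> \<Delta> ` U" unfolding U_def using yx by blast
    qed
  qed
  have eqv: "Tset F x = Tset F y \<longleftrightarrow> Tset F' (\<Delta> x) = Tset F' (\<Delta> y)" if "x \<in> U" "y \<in> U" for x y
  proof -
    have ux: "unitR (localization F) x" and uy: "unitR (localization F) y" using that unfolding U_def by auto
    hence xL: "x \<in> localization F" and yL: "y \<in> localization F" unfolding unitR_def by auto
    have ux': "unitR (localization F') (\<Delta> x)" and uy': "unitR (localization F') (\<Delta> y)" using unit ux uy by auto
    hence yL': "\<Delta> y \<in> localization F'" unfolding unitR_def by auto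
    show ?thesis
    proof
      assume "Tset F x = Tset F y"
      hence "simR F x y" using Tset_simR[OF F ux uy] by blast
      hence "simR F' (\<Delta> x) (\<Delta> y)" using simR_transfer[OF r cu yL] by blast
      thus "Tset F' (\<Delta> x) = Tset F' (\<Delta> y)" using simR_Tset[OF F' ux' uy'] by blast
    next
      assume "Tset F' (\<Delta> x) = Tset F' (\<Delta> y)"
      hence "simR F' (\<Delta> x) (\<Delta> y)" using Tset_simR[OF F' ux' uy'] by blast
      hence "simR F (E (\<Delta> x)) (E (\<Delta> y))" using simR_transfer[OF rE cuE yL'] by blast
      hence "simR F x y" unfolding E_def using invA xL yL by simp
      thus "Tset F x = Tset F y" using simR_Tset[OF F ux uy] by blast
    qed
  qed
  have "card (Tset F ` U) = card (Tset F' ` U')" by (rule card_quot[where g="Tset F" and h="Tset F'", OF img eqv])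
  hence "card (Pow (prime_factors F)) = card (Pow (prime_factors F'))"
    unfolding U_def U'_def Tset_image[OF F] Tset_image[OF F'] .
  hence "(2::nat) ^ card (prime_factors F) = 2 ^ card (prime_factors F')"
    by (simp add: card_Pow)
  thus ?thesis by simp
qed



lemma assoc_unit:
  fixes a b :: "'a::{factorial_semiring,idom}"
  assumes b: "b \<noteq> 0" and n: "normalize a = normalize b"
  shows "\<exists>u. is_unit u \<and> a = u * b"
proof -
  define u where "u = a div b"
  have "a = u * b" unfolding u_def using associatedD2[OF n] by simp
  moreover obtain d where "b = a * d" using associatedD1[OF n] by blast
  ultimately have "b * 1 = b * (u * d)" by (metis mult.assoc mult.commute mult_1_right)
  hence "u * d = 1" using b by (metis mult_left_cancel)
  hence "is_unit u" by (metis dvd_triv_left)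
  thus ?thesis using \<open>a = u * b\<close> by blast
qed

lemma dvd_prime_power_unit:
  fixes p a :: "'a::{factorial_semiring,idom}"
  assumes p: "prime_elem p" and a: "a \<noteq> 0" and d: "a dvd p ^ m"
  shows "\<exists>u k. is_unit u \<and> a = u * p ^ k"
proof -
  have p0: "p \<noteq> 0" using p by auto
  let ?k = "multiplicity p a"
  have "multiplicity q a = multiplicity q (p ^ ?k)" if q: "prime q" for q
  proof (cases "q dvd p")
    case True
    have "prime (normalize p)" using p by (simp add: prime_def)
    moreover have "q dvd normalize p" using True by simp
    ultimately have "q = normalize p" using q primes_dvd_imp_eq by blast
    thus ?thesis using p by (simp add: multiplicity_normalize_left)
  next
    case False
    hence "\<not> q dvd a" using d q prime_dvd_power dvd_trans by metis
    moreover have "\<not> q dvd p ^ ?k" using False q prime_dvd_power by metis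
    ultimately show ?thesis by (simp add: not_dvd_imp_multiplicity_0)
  qed
  hence "normalize a = normalize (p ^ ?k)" using a p0 by (intro multiplicity_eq_imp_eq) auto
  thus ?thesis using assoc_unit[of "p ^ ?k" a] p0 by auto
qed

lemma unit_loc_prime:
  fixes F :: "'a::{factorial_semiring,idom}"
  assumes F: "prime_elem F" and u: "unitR (localization F) x"
  shows "\<exists>c k n. is_unit c \<and> x = Fract (c * F ^ k) (F ^ n)"
proof -
  have F0: "F \<noteq> 0" using F by auto
  obtain a n m where "x = Fract a (F ^ n)" "a \<noteq> 0" "a dvd F ^ m" using unit_loc_obtain[OF F0 u] by blast
  thus ?thesis using dvd_prime_power_unit[OF F] by blast
qed

lemma fract_pow: "Fract (a::'a::idom) b ^ k = Fract (a ^ k) (b ^ k)"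
  by (induction k) (simp_all add: One_fract_def)

lemma mult_unit_pow:
  fixes p :: "'a::{factorial_semiring,idom}"
  assumes "prime_elem p" "is_unit c"
  shows "multiplicity p (c * p ^ k) = k"
  using assms by (simp add: multiplicity_times_unit_right)

lemma fract_inj1: "Fract (a::'a::idom) 1 = Fract b 1 \<longleftrightarrow> a = b"
  by (simp add: eq_fract)

lemma DeltaF:
  fixes F F' :: "'a::{factorial_semiring,idom}"
  assumes F: "prime_elem F" and F': "prime_elem F'"
    and r: "riso D (localization F) (localization F')"
    and cu: "\<And>c. is_unit c \<Longrightarrow> \<exists>c'. is_unit c' \<and> D (Fract c 1) = Fract c' 1"
  shows "\<exists>c1. is_unit c1 \<and> (D (Fract F 1) = Fract (c1 * F') 1 \<or> D (Fract F 1) = Fract c1 F')"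
proof -
  interpret riso D "localization F" "localization F'" by (rule r)
  have F0: "F \<noteq> 0" and F'0: "F' \<noteq> 0" using F F' by auto
  have uF: "unitR (localization F) (Fract F 1)"
    using unit_loc[OF F0, of F 0] F0 by (simp add: exI[of _ 1])
  define u where "u = D (Fract F 1)"
  have uu: "unitR (localization F') u" unfolding u_def using unit uF by blast
  obtain c1 i1 n1 where c1: "is_unit c1" and ue: "u = Fract (c1 * F' ^ i1) (F' ^ n1)"
    using unit_loc_prime[OF F' uu] by blast
  have uF': "unitR (localization F') (Fract F' 1)"
    using unit_loc[OF F'0, of F' 0] F'0 by (simp add: exI[of _ 1])
  obtain y where yL: "y \<in> localization F" and ye: "Fract F' 1 = D y"
    using surj uF' unfolding unitR_def by blast
  have uy: "unitR (localization F) y" using unit_iff yL uF' ye by simp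
  obtain c i n where c: "is_unit c" and yf: "y = Fract (c * F ^ i) (F ^ n)"
    using unit_loc_prime[OF F uy] by blast
  obtain c2 where c2: "is_unit c2" "D (Fract c 1) = Fract c2 1" using cu[OF c] by blast
  have y2: "y = Fract c 1 * Fract F 1 ^ i * Fract 1 (F ^ n)" unfolding yf by (simp add: fract_pow)
  define v where "v = D (Fract 1 (F ^ n))"
  have L1: "Fract c 1 \<in> localization F" "Fract F 1 \<in> localization F" "Fract 1 (F ^ n) \<in> localization F"
    using loc_const loc_mem by auto
  have "Fract 1 (F ^ n) * Fract F 1 ^ n = 1" using F0 by (simp add: fract_pow One_fract_def eq_fract)
  hence "D (Fract 1 (F ^ n) * Fract F 1 ^ n) = 1" using one by simp
  hence vu: "v * u ^ n = 1" unfolding v_def u_def using L1 subrD[OF sA] by (simp add: mult power)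
  have "D y = Fract c2 1 * u ^ i * v"
    unfolding y2 u_def v_def using L1 subrD[OF sA] c2 by (simp add: mult power)
  hence "Fract F' 1 * u ^ n = Fract c2 1 * u ^ i * (v * u ^ n)" using ye by (simp add: mult_ac)
  hence "Fract F' 1 * u ^ n = Fract c2 1 * u ^ i" using vu by simp
  hence "Fract (F' * (c1 * F' ^ i1) ^ n) ((F' ^ n1) ^ n) = Fract (c2 * (c1 * F' ^ i1) ^ i) ((F' ^ n1) ^ i)"
    unfolding ue by (simp add: fract_pow)
  hence "F' * (c1 * F' ^ i1) ^ n * (F' ^ n1) ^ i = c2 * (c1 * F' ^ i1) ^ i * (F' ^ n1) ^ n"
    using F'0 by (simp add: eq_fract)
  moreover have "F' * (c1 * F' ^ i1) ^ n * (F' ^ n1) ^ i = c1 ^ n * F' ^ (1 + i1 * n + n1 * i)"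
    by (simp add: power_mult_distrib power_add mult_ac flip: power_mult)
  moreover have "c2 * (c1 * F' ^ i1) ^ i * (F' ^ n1) ^ n = (c2 * c1 ^ i) * F' ^ (i1 * i + n1 * n)"
    by (simp add: power_mult_distrib power_add mult_ac flip: power_mult)
  ultimately have meq: "multiplicity F' (c1 ^ n * F' ^ (1 + i1 * n + n1 * i)) =
      multiplicity F' ((c2 * c1 ^ i) * F' ^ (i1 * i + n1 * n))" by simp
  have "is_unit (c1 ^ n)" "is_unit (c2 * c1 ^ i)" using c1 c2 by (auto simp: is_unit_power_iff)
  hence e1: "multiplicity F' (c1 ^ n * F' ^ (1 + i1 * n + n1 * i)) = 1 + i1 * n + n1 * i"
    and e2: "multiplicity F' ((c2 * c1 ^ i) * F' ^ (i1 * i + n1 * n)) = i1 * i + n1 * n"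
    using mult_unit_pow[OF F'] by blast+
  have h: "1 + i1 * n + n1 * i = i1 * i + n1 * n" using meq unfolding e1 e2 .
  have "int (1 + i1 * n + n1 * i) = int (i1 * i + n1 * n)" using h by (rule arg_cong)
  hence "(int i1 - int n1) * (int i - int n) = 1" by (simp add: algebra_simps)
  hence "int i1 - int n1 = 1 \<or> int i1 - int n1 = -1" unfolding zmult_eq_1_iff by blast
  hence "i1 = n1 + 1 \<or> n1 = i1 + 1" by linarith
  thus ?thesis
  proof
    assume i: "i1 = n1 + 1"
    have "u = Fract (c1 * F') 1" unfolding ue i using F'0 by (simp add: eq_fract)
    hence "D (Fract F 1) = Fract (c1 * F') 1" unfolding u_def .
    thus ?thesis using c1 by blast
  next
    assume i: "n1 = i1 + 1"
    have "u = Fract c1 F'" unfolding ue i using F'0 by (simp add: eq_fract)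
    hence "D (Fract F 1) = Fract c1 F'" unfolding u_def .
    thus ?thesis using c1 by blast
  qed
qed



lemma prime_not_dvd_pow:
  fixes p :: "'a::{factorial_semiring,idom}"
  assumes "prime p" "\<not> p dvd F" shows "\<not> p dvd F ^ m"
  using assms prime_dvd_power by blast

lemma not_unit_prime_loc:
  fixes F :: "'a::{factorial_semiring,idom}"
  assumes F: "F \<noteq> 0" and p: "prime p" and nd: "\<not> p dvd F"
  shows "\<not> unitR (localization F) (Fract p 1)"
proof
  assume "unitR (localization F) (Fract p 1)"
  hence "unitR (localization F) (Fract p (F ^ 0))" by simp
  then obtain m where "p dvd F ^ m" unfolding unit_loc[OF F] by blast
  thus False using prime_not_dvd_pow[OF p nd] by blast
qed

lemma irr_prime_loc:
  fixes F :: "'a::{factorial_semiring,idom}"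
  assumes F: "F \<noteq> 0" and p: "prime p" and nd: "\<not> p dvd F"
  shows "irrR (localization F) (Fract p 1)"
proof -
  have p0: "p \<noteq> 0" using p by auto
  have "unitR (localization F) b \<or> unitR (localization F) c"
    if bL: "b \<in> localization F" and cL: "c \<in> localization F" and e: "Fract p 1 = b * c" for b c
  proof -
    obtain a n where b: "b = Fract a (F ^ n)" using bL unfolding loc_iff by blast
    obtain d m where c: "c = Fract d (F ^ m)" using cL unfolding loc_iff by blast
    have "Fract p 1 = Fract (a * d) (F ^ n * F ^ m)" using e b c by simp
    hence pe: "p * (F ^ n * F ^ m) = a * d" using F by (simp add: eq_fract)
    hence "p dvd a * d" by (metis dvd_triv_left)
    hence "p dvd a \<or> p dvd d" using p prime_dvd_mult_iff by blast
    thus ?thesis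
    proof
      assume "p dvd a"
      then obtain a' where "a = p * a'" by blast
      hence "p * (F ^ n * F ^ m) = p * (a' * d)" using pe by (simp add: mult_ac)
      hence "F ^ n * F ^ m = a' * d" using p0 by simp
      hence "d \<noteq> 0 \<and> (\<exists>k. d dvd F ^ k)" using F by (metis dvd_triv_right mult_zero_right power_add power_not_zero)
      hence "unitR (localization F) c" unfolding c unit_loc[OF F] .
      thus ?thesis by blast
    next
      assume "p dvd d"
      then obtain d' where "d = p * d'" by blast
      hence "p * (F ^ n * F ^ m) = p * (a * d')" using pe by (simp add: mult_ac)
      hence "F ^ n * F ^ m = a * d'" using p0 by simp
      hence "a \<noteq> 0 \<and> (\<exists>k. a dvd F ^ k)" using F by (metis dvd_triv_left mult_zero_left power_add power_not_zero)
      hence "unitR (localization F) b" unfolding b unit_loc[OF F] .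
      thus ?thesis by blast
    qed
  qed
  moreover have "Fract p 1 \<noteq> 0" using p0 by (simp add: Zero_fract_def eq_fract)
  ultimately show ?thesis unfolding irrR_def using loc_const not_unit_prime_loc[OF F p nd] by blast
qed

lemma dvd_pow_loc:
  fixes F :: "'a::{factorial_semiring,idom}"
  assumes F: "F \<noteq> 0" and p: "prime p" and nd: "\<not> p dvd F"
  shows "dvdR (localization F) (Fract p 1 ^ k) (Fract x 1) \<longleftrightarrow> p ^ k dvd x"
proof
  assume "dvdR (localization F) (Fract p 1 ^ k) (Fract x 1)"
  then obtain r where rL: "r \<in> localization F" and e: "Fract x 1 = Fract p 1 ^ k * r" unfolding dvdR_def by blast
  obtain b n where r: "r = Fract b (F ^ n)" using rL unfolding loc_iff by blast
  have "Fract x 1 = Fract (p ^ k * b) (F ^ n)" using e r by (simp add: fract_pow)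
  hence xe: "x * F ^ n = p ^ k * b" using F by (simp add: eq_fract)
  show "p ^ k dvd x"
  proof (cases "x = 0")
    case False
    have m0: "multiplicity p F = 0" using nd by (rule not_dvd_imp_multiplicity_0)
    have "p ^ k dvd x * F ^ n" using xe by simp
    hence "k \<le> multiplicity p (x * F ^ n)" using False F p
      by (simp add: power_dvd_iff_le_multiplicity)
    also have "multiplicity p (x * F ^ n) = multiplicity p x" using mult_prod[OF p False F] m0 by simp
    finally show ?thesis using False p by (simp add: power_dvd_iff_le_multiplicity)
  qed simp
next
  assume "p ^ k dvd x"
  then obtain e where "x = p ^ k * e" by blast
  hence "Fract x 1 = Fract p 1 ^ k * Fract e 1" by (simp add: fract_pow)
  thus "dvdR (localization F) (Fract p 1 ^ k) (Fract x 1)" unfolding dvdR_def using loc_const by blast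
qed

lemma all_dvd_F_imp_dvd_pow:
  fixes F b :: "'a::{factorial_semiring,idom}"
  assumes F: "F \<noteq> 0" and b: "b \<noteq> 0" and h: "\<And>q. prime q \<Longrightarrow> q dvd b \<Longrightarrow> q dvd F"
  shows "\<exists>K. b dvd F ^ K"
proof -
  define K where "K = (\<Sum>r\<in>prime_factors b. multiplicity r b)"
  have "b dvd F ^ K"
  proof (rule multiplicity_le_imp_dvd[OF b])
    fix r :: 'a assume r: "prime r"
    show "multiplicity r b \<le> multiplicity r (F ^ K)"
    proof (cases "r dvd b")
      case True
      hence rb: "r \<in> prime_factors b" using r b by (simp add: in_prime_factors_iff)
      have "multiplicity r F > 0" using h[OF r True] F r by (simp add: prime_multiplicity_gt_zero_iff)
      have "multiplicity r b \<le> K" unfolding K_def using rb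
        by (intro member_le_sum) auto
      also have "\<dots> \<le> K * multiplicity r F" using \<open>multiplicity r F > 0\<close> by simp
      also have "\<dots> = multiplicity r (F ^ K)" using r F by (simp add: prime_elem_multiplicity_power_distrib)
      finally show ?thesis .
    qed (simp add: not_dvd_imp_multiplicity_0)
  qed
  thus ?thesis by blast
qed

lemma irr_classify:
  fixes F y :: "'a::{factorial_semiring,idom}"
  assumes F: "F \<noteq> 0" and ia: "irrR (localization F) a" and da: "dvdR (localization F) a (Fract y 1)"
    and y: "y \<noteq> 0"
  shows "\<exists>q\<in>prime_factors y. \<not> q dvd F \<and> (\<exists>u. unitR (localization F) u \<and> a = u * Fract q 1)"
proof -
  have aL: "a \<in> localization F" and a0: "a \<noteq> 0" and au: "\<not> unitR (localization F) a"
    and ai: "\<And>b c. b \<in> localization F \<Longrightarrow> c \<in> localization F \<Longrightarrow> a = b * c \<Longrightarrow>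
         unitR (localization F) b \<or> unitR (localization F) c"
    using ia unfolding irrR_def by auto
  obtain b n where ab: "a = Fract b (F ^ n)" using aL unfolding loc_iff by blast
  have b0: "b \<noteq> 0" using a0 ab by (auto simp: Zero_fract_def eq_fract)
  have "\<exists>q. prime q \<and> q dvd b \<and> \<not> q dvd F"
  proof (rule ccontr)
    assume "\<not> ?thesis"
    hence "\<exists>K. b dvd F ^ K" using all_dvd_F_imp_dvd_pow[OF F b0] by blast
    hence "unitR (localization F) a" unfolding ab unit_loc[OF F] using b0 by blast
    thus False using au by blast
  qed
  then obtain q b' where q: "prime q" and bq: "b = q * b'" and nq: "\<not> q dvd F" by blast
  have a2: "a = Fract q 1 * Fract b' (F ^ n)" unfolding ab bq by simp
  have "unitR (localization F) (Fract q 1) \<or> unitR (localization F) (Fract b' (F ^ n))"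
    using ai[OF loc_const loc_mem a2] .
  hence u: "unitR (localization F) (Fract b' (F ^ n))" using not_unit_prime_loc[OF F q nq] by blast
  obtain r where rL: "r \<in> localization F" and re: "Fract y 1 = a * r" using da unfolding dvdR_def by blast
  obtain e m where r: "r = Fract e (F ^ m)" using rL unfolding loc_iff by blast
  have "Fract y 1 = Fract (q * b' * e) (F ^ n * F ^ m)" using re r ab bq by simp
  hence "y * (F ^ n * F ^ m) = q * b' * e" using F by (simp add: eq_fract)
  hence "q dvd y * F ^ (n + m)" by (metis dvd_triv_left mult.assoc power_add)
  hence "q dvd y" using q prime_not_dvd_pow[OF q nq] prime_dvd_mult_iff by blast
  hence "q \<in> prime_factors y" using q y by (simp add: in_prime_factors_iff)
  moreover have "a = Fract b' (F ^ n) * Fract q 1" using a2 by (simp add: mult.commute)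
  ultimately show ?thesis using u nq by blast
qed

lemma assoc_eq:
  fixes F p q :: "'a::{factorial_semiring,idom}"
  assumes F: "F \<noteq> 0" and p: "prime p" and q: "prime q" and nq: "\<not> q dvd F"
    and u: "unitR (localization F) u" and e: "Fract p 1 = u * Fract q 1"
  shows "p = q"
proof -
  obtain a n m where ua: "u = Fract a (F ^ n)" "a \<noteq> 0" "a dvd F ^ m" using unit_loc_obtain[OF F u] by blast
  have "Fract p 1 = Fract (a * q) (F ^ n)" using e ua by simp
  hence "p * F ^ n = a * q" using F by (simp add: eq_fract)
  hence "q dvd p * F ^ n" by simp
  hence "q dvd p" using q prime_not_dvd_pow[OF q nq] prime_dvd_mult_iff by blast
  thus ?thesis using primes_dvd_imp_eq[OF q p] by simp
qed



lemma unitR_inv: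
  assumes "unitR A u" obtains u' where "u' \<in> A" "u * u' = 1"
  using assms unfolding unitR_def by blast

lemma unitR_mem: "unitR A u \<Longrightarrow> u \<in> A" unfolding unitR_def by blast

lemma unitR_mult:
  assumes s: "subr A" and "unitR A u" "unitR A v" shows "unitR A (u * v)"
proof -
  obtain u' v' where "u' \<in> A" "u * u' = 1" "v' \<in> A" "v * v' = 1" using assms unitR_inv by metis
  moreover have "u * v * (u' * v') = (u * u') * (v * v')" by (simp add: mult_ac)
  ultimately show ?thesis unfolding unitR_def using assms(2,3) subrD[OF s] unitR_mem by (metis mult_1_right)
qed

lemma unitR_pow:
  assumes s: "subr A" and u: "unitR A u" shows "unitR A (u ^ k)"
proof (induction k)
  case 0 thus ?case using subrD[OF s] by (auto simp: unitR_def)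
next
  case (Suc k) thus ?case using unitR_mult[OF s u] by simp
qed

lemma dvdR_unit_left:
  assumes s: "subr A" and u: "unitR A u"
  shows "dvdR A (u * a) b \<longleftrightarrow> dvdR A a b"
proof
  assume "dvdR A (u * a) b"
  then obtain r where "r \<in> A" "b = u * a * r" unfolding dvdR_def by blast
  moreover have "u * r \<in> A" using subrD(4)[OF s] unitR_mem[OF u] \<open>r \<in> A\<close> by blast
  ultimately show "dvdR A a b" unfolding dvdR_def by (metis mult.assoc mult.commute)
next
  assume "dvdR A a b"
  then obtain r where rA: "r \<in> A" and br: "b = a * r" unfolding dvdR_def by blast
  obtain u' where u'A: "u' \<in> A" and uu: "u * u' = 1" using u unitR_inv by blast
  have "b = u * a * (u' * r)" using br uu by (metis mult.assoc mult.commute mult_1_right)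
  moreover have "u' * r \<in> A" using subrD(4)[OF s] u'A rA by blast
  ultimately show "dvdR A (u * a) b" unfolding dvdR_def by blast
qed

lemma dvdR_unit_right:
  assumes s: "subr A" and u: "unitR A u"
  shows "dvdR A a (u * b) \<longleftrightarrow> dvdR A a b"
proof
  assume "dvdR A a (u * b)"
  then obtain r where rA: "r \<in> A" and br: "u * b = a * r" unfolding dvdR_def by blast
  obtain u' where u'A: "u' \<in> A" and uu: "u * u' = 1" using u unitR_inv by blast
  have "b = u' * (u * b)" using uu by (metis mult.assoc mult.commute mult_1_right)
  also have "\<dots> = u' * (a * r)" using br by simp
  also have "\<dots> = a * (u' * r)" by (simp add: mult_ac)
  finally have "b = a * (u' * r)" .
  moreover have "u' * r \<in> A" using subrD(4)[OF s] u'A rA by blast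
  ultimately show "dvdR A a b" unfolding dvdR_def by blast
next
  assume "dvdR A a b"
  then obtain r where rA: "r \<in> A" and br: "b = a * r" unfolding dvdR_def by blast
  have "u * b = a * (u * r)" using br by (simp add: mult_ac)
  moreover have "u * r \<in> A" using subrD(4)[OF s] unitR_mem[OF u] rA by blast
  ultimately show "dvdR A a (u * b)" unfolding dvdR_def by blast
qed

context riso begin
lemma dvd_iff: "a \<in> A \<Longrightarrow> b \<in> A \<Longrightarrow> dvdR B (D a) (D b) \<longleftrightarrow> dvdR A a b"
  using dvd riso.dvd[OF inv_riso] invA mem by metis
end

lemma inj_dir:
  fixes F F' x y :: "'a::{factorial_semiring,idom}"
  assumes F: "F \<noteq> 0" and F': "F' \<noteq> 0" and r: "riso D (localization F) (localization F')"
    and x: "x \<noteq> 0" and y: "y \<noteq> 0" and Hx: "\<And>p. p \<in> prime_factors x \<Longrightarrow> \<not> p dvd F"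
    and w: "unitR (localization F') w" and e: "D (Fract x 1) = w * Fract y 1"
  shows "\<exists>\<phi>. inj_on \<phi> (prime_factors x) \<and> \<phi> ` prime_factors x \<subseteq> prime_factors y \<and>
           (\<forall>p\<in>prime_factors x. multiplicity (\<phi> p) y = multiplicity p x)"
proof -
  interpret riso D "localization F" "localization F'" by (rule r)
  let ?A = "localization F" and ?B = "localization F'"
  define P where "P p q \<longleftrightarrow> q \<in> prime_factors y \<and> \<not> q dvd F' \<and> (\<exists>u. unitR ?B u \<and> D (Fract p 1) = u * Fract q 1)" for p q
  have ex: "\<exists>q. P p q" if p: "p \<in> prime_factors x" for p
  proof -
    have pp: "prime p" and pd: "p dvd x" and nd: "\<not> p dvd F" using p Hx by auto
    have "irrR ?B (D (Fract p 1))" using irr irr_prime_loc[OF F pp nd] by blast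
    moreover have "dvdR ?A (Fract p 1) (Fract x 1)" using dvd_pow_loc[OF F pp nd, of 1 x] pd by simp
    hence "dvdR ?B (D (Fract p 1)) (w * Fract y 1)" using dvd[OF loc_const] e by metis
    hence "dvdR ?B (D (Fract p 1)) (Fract y 1)" using dvdR_unit_right[OF sB w] by blast
    ultimately show ?thesis unfolding P_def using irr_classify[OF F' _ _ y] by blast
  qed
  define \<phi> where "\<phi> p = (SOME q. P p q)" for p
  have \<phi>: "P p (\<phi> p)" if "p \<in> prime_factors x" for p
    unfolding \<phi>_def using ex[OF that] by (rule someI_ex)
  have mult_eq: "multiplicity (\<phi> p) y = multiplicity p x" if p: "p \<in> prime_factors x" for p
  proof -
    have pp: "prime p" and nd: "\<not> p dvd F" using p Hx by auto
    obtain u where q: "\<phi> p \<in> prime_factors y" "\<not> \<phi> p dvd F'" and u: "unitR ?B u"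
      and ue: "D (Fract p 1) = u * Fract (\<phi> p) 1"
      using \<phi>[OF p] unfolding P_def by blast
    have qp: "prime (\<phi> p)" using q by auto
    have "p ^ k dvd x \<longleftrightarrow> \<phi> p ^ k dvd y" for k
    proof -
      have "p ^ k dvd x \<longleftrightarrow> dvdR ?A (Fract p 1 ^ k) (Fract x 1)" using dvd_pow_loc[OF F pp nd] by simp
      also have "\<dots> \<longleftrightarrow> dvdR ?B (D (Fract p 1 ^ k)) (D (Fract x 1))"
        using dvd_iff subrD(7)[OF sA loc_const] loc_const by blast
      also have "D (Fract p 1 ^ k) = u ^ k * Fract (\<phi> p) 1 ^ k"
        using power[OF loc_const] ue by (simp add: power_mult_distrib)
      also have "dvdR ?B (u ^ k * Fract (\<phi> p) 1 ^ k) (D (Fract x 1)) \<longleftrightarrow> dvdR ?B (Fract (\<phi> p) 1 ^ k) (Fract y 1)"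
        unfolding e dvdR_unit_left[OF sB unitR_pow[OF sB u]] dvdR_unit_right[OF sB w] ..
      also have "\<dots> \<longleftrightarrow> \<phi> p ^ k dvd y" using dvd_pow_loc[OF F' qp q(2)] by simp
      finally show ?thesis .
    qed
    hence "k \<le> multiplicity p x \<longleftrightarrow> k \<le> multiplicity (\<phi> p) y" for k
      using x y pp qp by (simp add: power_dvd_iff_le_multiplicity)
    thus ?thesis by (meson le_antisym order_refl)
  qed
  have "inj_on \<phi> (prime_factors x)"
  proof (rule inj_onI)
    fix p1 p2 assume p1: "p1 \<in> prime_factors x" and p2: "p2 \<in> prime_factors x" and eq: "\<phi> p1 = \<phi> p2"
    obtain u1 where u1: "unitR ?B u1" and e1: "D (Fract p1 1) = u1 * Fract (\<phi> p1) 1"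
      using \<phi>[OF p1] unfolding P_def by blast
    obtain u2 where u2: "unitR ?B u2" and e2: "D (Fract p2 1) = u2 * Fract (\<phi> p2) 1"
      using \<phi>[OF p2] unfolding P_def by blast
    obtain u2' where u2'B: "u2' \<in> ?B" and uu: "u2 * u2' = 1" using u2 unitR_inv by blast
    have u2'u: "unitR ?B u2'" unfolding unitR_def using u2'B unitR_mem[OF u2] uu by (metis mult.commute)
    have "D (Fract p1 1) = (u1 * u2') * D (Fract p2 1)"
      unfolding e1 e2 eq using uu by (metis mult.assoc mult.commute mult_1_right)
    moreover have vu: "unitR ?B (u1 * u2')" using unitR_mult[OF sB u1 u2'u] .
    then obtain v where vA: "v \<in> ?A" and vD: "u1 * u2' = D v" using surj unitR_mem by metis
    ultimately have "D (Fract p1 1) = D (v * Fract p2 1)" using mult[OF vA loc_const] by simp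
    hence "Fract p1 1 = v * Fract p2 1" using inj loc_const subrD(4)[OF sA vA loc_const] by blast
    moreover have "unitR ?A v" using unit_iff vA vu vD by simp
    ultimately show "p1 = p2" using assoc_eq[OF F, of p1 p2 v] p1 p2 Hx by auto
  qed
  moreover have "\<phi> ` prime_factors x \<subseteq> prime_factors y" using \<phi> unfolding P_def by blast
  ultimately show ?thesis using mult_eq by blast
qed



lemma transfer_mset:
  fixes F F' x y :: "'a::{factorial_semiring,idom}"
  assumes F: "F \<noteq> 0" and F': "F' \<noteq> 0" and r: "riso D (localization F) (localization F')"
    and x: "x \<noteq> 0" and y: "y \<noteq> 0" and Hx: "\<And>p. p \<in> prime_factors x \<Longrightarrow> \<not> p dvd F"
    and Hy: "\<And>p. p \<in> prime_factors y \<Longrightarrow> \<not> p dvd F'"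
    and w: "unitR (localization F') w" and e: "D (Fract x 1) = w * Fract y 1"
  shows "image_mset (\<lambda>p. multiplicity p x) (mset_set (prime_factors x)) =
         image_mset (\<lambda>p. multiplicity p y) (mset_set (prime_factors y))"
proof -
  interpret riso D "localization F" "localization F'" by (rule r)
  obtain \<phi> where \<phi>i: "inj_on \<phi> (prime_factors x)" and \<phi>s: "\<phi> ` prime_factors x \<subseteq> prime_factors y"
    and \<phi>m: "\<And>p. p \<in> prime_factors x \<Longrightarrow> multiplicity (\<phi> p) y = multiplicity p x"
    using inj_dir[OF F F' r x y Hx w e] by blast
  define E where "E = inv_into (localization F) D"
  have rE: "riso E (localization F') (localization F)" unfolding E_def by (rule inv_riso)
  obtain w' where w'B: "w' \<in> localization F'" and ww: "w * w' = 1" using w unitR_inv by blast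
  have w'u: "unitR (localization F') w'" unfolding unitR_def using w'B unitR_mem[OF w] ww by (metis mult.commute)
  have "Fract y 1 = w' * D (Fract x 1)" unfolding e using ww by (metis mult.assoc mult.commute mult_1_right)
  hence "E (Fract y 1) = E w' * E (D (Fract x 1))"
    using riso.mult[OF rE w'B mem[OF loc_const]] by simp
  hence ey: "E (Fract y 1) = E w' * Fract x 1" unfolding E_def using invA[OF loc_const] by simp
  have Ewu: "unitR (localization F) (E w')" using riso.unit[OF rE w'u] .
  obtain \<psi> where \<psi>i: "inj_on \<psi> (prime_factors y)" and \<psi>s: "\<psi> ` prime_factors y \<subseteq> prime_factors x"
    using inj_dir[OF F' F rE y x Hy Ewu ey] by blast
  have fx: "finite (prime_factors x)" and fy: "finite (prime_factors y)" by auto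
  have "card (prime_factors x) \<le> card (prime_factors y)" using card_inj_on_le[OF \<phi>i \<phi>s fy] .
  moreover have "card (prime_factors y) \<le> card (prime_factors x)" using card_inj_on_le[OF \<psi>i \<psi>s fx] .
  ultimately have "card (\<phi> ` prime_factors x) = card (prime_factors y)" using card_image[OF \<phi>i] by simp
  hence im: "\<phi> ` prime_factors x = prime_factors y" using card_subset_eq[OF fy \<phi>s] by blast
  have "image_mset (\<lambda>p. multiplicity p x) (mset_set (prime_factors x)) =
        image_mset (\<lambda>p. multiplicity (\<phi> p) y) (mset_set (prime_factors x))"
    using \<phi>m by (intro image_mset_cong) (simp add: fx)
  also have "\<dots> = image_mset (\<lambda>q. multiplicity q y) (image_mset \<phi> (mset_set (prime_factors x)))"
    by (simp add: multiset.map_comp comp_def)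
  also have "image_mset \<phi> (mset_set (prime_factors x)) = mset_set (prime_factors y)"
    using image_mset_mset_set[OF \<phi>i] im by simp
  finally show ?thesis .
qed



lemma final_from:
  fixes F F' :: "'a::{factorial_semiring,idom}" and \<Delta> :: "'a fract \<Rightarrow> 'a fract" and \<Theta> :: "'a \<Rightarrow> 'a"
  assumes F: "F \<noteq> 0" and F': "F' \<noteq> 0" and Fu: "\<not> is_unit F" and F'u: "\<not> is_unit F'"
    and r: "riso \<Delta> (localization F) (localization F')"
    and bij: "bij_betw \<Theta> units_S units_S"
    and H: "\<And>C. is_unit C \<Longrightarrow> \<exists>w. unitR (localization F') w \<and> \<Delta> (Fract (F - C) 1) = w * Fract (F' - \<Theta> C) 1"
  shows "\<exists>\<Theta>. bij_betw \<Theta> units_S units_S \<and>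
            (\<forall>C\<in>units_S. nfactors (F - C) = nfactors (F' - \<Theta> C) \<and>
               (\<forall>i. 1 \<le> i \<and> i \<le> nfactors (F - C) \<longrightarrow>
                    exps (F - C) ! (i - 1) = exps (F' - \<Theta> C) ! (i - 1)))"
proof (rule exI[of _ \<Theta>], rule conjI[OF bij], rule ballI)
  fix C :: 'a assume C: "C \<in> units_S"
  hence Cu: "is_unit C" by (simp add: units_S_def)
  have "\<Theta> C \<in> units_S" using bij_betwE[OF bij] C by blast
  hence TCu: "is_unit (\<Theta> C)" by (simp add: units_S_def)
  have x: "F - C \<noteq> 0"
  proof
    assume "F - C = 0" hence "F = C" by simp
    thus False using Cu Fu by simp
  qed
  have y: "F' - \<Theta> C \<noteq> 0"
  proof
    assume "F' - \<Theta> C = 0" hence "F' = \<Theta> C" by simp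
    thus False using TCu F'u by simp
  qed
  have Hx: "\<not> p dvd F" if "p \<in> prime_factors (F - C)" for p
  proof
    assume "p dvd F"
    moreover have "p dvd F - C" "prime p" using that by (simp_all add: in_prime_factors_iff)
    ultimately have "p dvd F - (F - C)" using dvd_diff by blast
    hence "p dvd C" by simp
    hence "is_unit p" using Cu dvd_unit_imp_unit by blast
    thus False using \<open>prime p\<close> not_prime_unit by blast
  qed
  have Hy: "\<not> p dvd F'" if "p \<in> prime_factors (F' - \<Theta> C)" for p
  proof
    assume "p dvd F'"
    moreover have "p dvd F' - \<Theta> C" "prime p" using that by (simp_all add: in_prime_factors_iff)
    ultimately have "p dvd F' - (F' - \<Theta> C)" using dvd_diff by blast
    hence "p dvd \<Theta> C" by simp
    hence "is_unit p" using TCu dvd_unit_imp_unit by blast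
    thus False using \<open>prime p\<close> not_prime_unit by blast
  qed
  obtain w where w: "unitR (localization F') w" and e: "\<Delta> (Fract (F - C) 1) = w * Fract (F' - \<Theta> C) 1"
    using H[OF Cu] by blast
  have M: "image_mset (\<lambda>p. multiplicity p (F - C)) (mset_set (prime_factors (F - C))) =
         image_mset (\<lambda>p. multiplicity p (F' - \<Theta> C)) (mset_set (prime_factors (F' - \<Theta> C)))"
    using transfer_mset[OF F F' r x y Hx Hy w e] .
  have "nfactors (F - C) = size (image_mset (\<lambda>p. multiplicity p (F - C)) (mset_set (prime_factors (F - C))))"
    unfolding nfactors_def by simp
  also have "\<dots> = nfactors (F' - \<Theta> C)" unfolding M nfactors_def by simp
  finally show "nfactors (F - C) = nfactors (F' - \<Theta> C) \<and>
               (\<forall>i. 1 \<le> i \<and> i \<le> nfactors (F - C) \<longrightarrow>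
                    exps (F - C) ! (i - 1) = exps (F' - \<Theta> C) ! (i - 1))"
    unfolding exps_def M by simp
qed

theorem mainTheorem18:
  fixes F F' :: "'a::{factorial_semiring,idom}"
    and \<Delta> :: "'a fract \<Rightarrow> 'a fract"
  assumes "F \<noteq> 0" and "\<not> is_unit F" and "F' \<noteq> 0" and "\<not> is_unit F'"
    and "ring_iso_on \<Delta> (localization F) (localization F')"
    and "\<Delta> ` ((\<lambda>c. Fract c 1) ` units_S) = (\<lambda>c. Fract c 1) ` units_S"
  shows "nfactors (F - 0) = nfactors (F' - 0) \<and>
        (irreducible F \<longrightarrow> irreducible F' \<longrightarrow>
         (\<exists>\<Theta>. bij_betw \<Theta> units_S units_S \<and>
            (\<forall>C\<in>units_S. nfactors (F - C) = nfactors (F' - \<Theta> C) \<and>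
               (\<forall>i. 1 \<le> i \<and> i \<le> nfactors (F - C) \<longrightarrow>
                    exps (F - C) ! (i - 1) = exps (F' - \<Theta> C) ! (i - 1)))))"
proof -
  note F = assms(1) and Fu = assms(2) and F' = assms(3) and F'u = assms(4) and iso = assms(5) and IM = assms(6)
  have r: "riso \<Delta> (localization F) (localization F')"
    using iso subr_loc[OF F] subr_loc[OF F'] by (simp add: riso_def)
  interpret riso \<Delta> "localization F" "localization F'" by (rule r)
  have cu: "\<exists>c'. is_unit c' \<and> \<Delta> (Fract c 1) = Fract c' 1" if "is_unit c" for c
  proof -
    have "\<Delta> (Fract c 1) \<in> \<Delta> ` ((\<lambda>c. Fract c 1) ` units_S)" using that by (auto simp: units_S_def)
    thus ?thesis unfolding IM by (auto simp: units_S_def)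
  qed
  have p1: "nfactors (F - 0) = nfactors (F' - 0)"
    unfolding nfactors_def using part1[OF F F' iso IM] by simp
  moreover have "\<exists>\<Theta>. bij_betw \<Theta> units_S units_S \<and>
            (\<forall>C\<in>units_S. nfactors (F - C) = nfactors (F' - \<Theta> C) \<and>
               (\<forall>i. 1 \<le> i \<and> i \<le> nfactors (F - C) \<longrightarrow>
                    exps (F - C) ! (i - 1) = exps (F' - \<Theta> C) ! (i - 1)))"
    if irrF: "irreducible F" and irrF': "irreducible F'"
  proof -
    have Fp: "prime_elem F" and F'p: "prime_elem F'" using irrF irrF' prime_elem_iff_irreducible by blast+
    obtain c1 where c1: "is_unit c1"
      and cases: "\<Delta> (Fract F 1) = Fract (c1 * F') 1 \<or> \<Delta> (Fract F 1) = Fract c1 F'"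
      using DeltaF[OF Fp F'p r cu] by blast
    define g where "g C = (SOME C'. is_unit C' \<and> \<Delta> (Fract C 1) = Fract C' 1)" for C
    have g: "is_unit (g C) \<and> \<Delta> (Fract C 1) = Fract (g C) 1" if "is_unit C" for C
      unfolding g_def using cu[OF that] by (rule someI_ex)
    have gbij: "bij_betw g units_S units_S"
    proof (rule bij_betw_imageI)
      show "inj_on g units_S"
      proof (rule inj_onI)
        fix C1 C2 assume "C1 \<in> units_S" "C2 \<in> units_S" "g C1 = g C2"
        hence "\<Delta> (Fract C1 1) = \<Delta> (Fract C2 1)" using g by (simp add: units_S_def)
        hence "Fract C1 1 = Fract C2 1" using inj loc_const by blast
        thus "C1 = C2" by (simp add: fract_inj1)
      qed
      show "g ` units_S = units_S"
      proof
        show "g ` units_S \<subseteq> units_S" using g by (auto simp: units_S_def)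
        show "units_S \<subseteq> g ` units_S"
        proof
          fix C' :: 'a assume C': "C' \<in> units_S"
          hence "Fract C' 1 \<in> \<Delta> ` ((\<lambda>c. Fract c 1) ` units_S)" unfolding IM by blast
          then obtain C where C: "C \<in> units_S" and "Fract C' 1 = \<Delta> (Fract C 1)" by blast
          hence "Fract C' 1 = Fract (g C) 1" using g by (simp add: units_S_def)
          hence "C' = g C" by (simp add: fract_inj1)
          thus "C' \<in> g ` units_S" using C by blast
        qed
      qed
    qed
    have c10: "c1 \<noteq> 0" using c1 by auto
    from cases show ?thesis
    proof
      assume DF: "\<Delta> (Fract F 1) = Fract (c1 * F') 1"
      define \<Theta> where "\<Theta> C = g C div c1" for C
      have hb: "bij_betw (\<lambda>x. x div c1) units_S units_S"
      proof (rule bij_betw_byWitness[where f'="\<lambda>x. x * c1"])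
        show "\<forall>a\<in>units_S. a div c1 * c1 = a" using c1 by (auto simp: units_S_def)
        show "\<forall>a'\<in>units_S. a' * c1 div c1 = a'" using c10 by simp
        show "(\<lambda>x. x div c1) ` units_S \<subseteq> units_S" using c1 by (auto simp: units_S_def)
        show "(\<lambda>x. x * c1) ` units_S \<subseteq> units_S" using c1 by (auto simp: units_S_def)
      qed
      have "bij_betw \<Theta> units_S units_S" unfolding \<Theta>_def
        using bij_betw_trans[OF gbij hb] by (simp add: comp_def)
      moreover have "\<exists>w. unitR (localization F') w \<and> \<Delta> (Fract (F - C) 1) = w * Fract (F' - \<Theta> C) 1"
        if C: "is_unit C" for C
      proof -
        have gC: "is_unit (g C)" "\<Delta> (Fract C 1) = Fract (g C) 1" using g[OF C] by auto
        have gd: "c1 * (g C div c1) = g C" by (rule dvd_mult_div_cancel[OF unit_imp_dvd[OF c1]])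
        have e2: "Fract c1 1 * Fract (F' - \<Theta> C) 1 = Fract (c1 * F' - c1 * (g C div c1)) 1"
          unfolding \<Theta>_def by (simp add: right_diff_distrib)
        have "\<Delta> (Fract (F - C) 1) = \<Delta> (Fract F 1 - Fract C 1)" by simp
        also have "\<dots> = Fract (c1 * F') 1 - Fract (g C) 1" using diff[OF loc_const loc_const] DF gC by simp
        also have "\<dots> = Fract c1 1 * Fract (F' - \<Theta> C) 1" unfolding e2 gd by simp
        finally have de: "\<Delta> (Fract (F - C) 1) = Fract c1 1 * Fract (F' - \<Theta> C) 1" .
        have "c1 dvd F' ^ 0" using c1 by simp
        hence "unitR (localization F') (Fract c1 (F' ^ 0))"
          unfolding unit_loc[OF F'] using c10 by blast
        hence "unitR (localization F') (Fract c1 1)" by simp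
        thus ?thesis using de by blast
      qed
      ultimately show ?thesis by (rule final_from[OF F F' Fu F'u r])
    next
      assume DF: "\<Delta> (Fract F 1) = Fract c1 F'"
      define \<Theta> where "\<Theta> C = c1 div g C" for C
      have inv: "c1 div (c1 div x) = x" if "is_unit x" for x
      proof -
        have eq: "x * (c1 div x) = c1" by (rule dvd_mult_div_cancel[OF unit_imp_dvd[OF that]])
        have ne: "c1 div x \<noteq> 0"
        proof
          assume "c1 div x = 0" thus False using eq c10 by simp
        qed
        have "c1 div (c1 div x) = (x * (c1 div x)) div (c1 div x)" using eq by simp
        also have "\<dots> = x" by (rule nonzero_mult_div_cancel_right[OF ne])
        finally show ?thesis .
      qed
      have hb: "bij_betw (\<lambda>x. c1 div x) units_S units_S"
      proof (rule bij_betw_byWitness[where f'="\<lambda>x. c1 div x"])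
        show "\<forall>a\<in>units_S. c1 div (c1 div a) = a" using inv by (auto simp: units_S_def)
        show "\<forall>a'\<in>units_S. c1 div (c1 div a') = a'" using inv by (auto simp: units_S_def)
        show "(\<lambda>x. c1 div x) ` units_S \<subseteq> units_S" using c1 unit_div by (auto simp: units_S_def)
        show "(\<lambda>x. c1 div x) ` units_S \<subseteq> units_S" using c1 unit_div by (auto simp: units_S_def)
      qed
      have "bij_betw \<Theta> units_S units_S" unfolding \<Theta>_def
        using bij_betw_trans[OF gbij hb] by (simp add: comp_def)
      moreover have "\<exists>w. unitR (localization F') w \<and> \<Delta> (Fract (F - C) 1) = w * Fract (F' - \<Theta> C) 1"
        if C: "is_unit C" for C
      proof -
        have gC: "is_unit (g C)" "\<Delta> (Fract C 1) = Fract (g C) 1" using g[OF C] by auto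
        have gd: "g C * (c1 div g C) = c1" by (rule dvd_mult_div_cancel[OF unit_imp_dvd[OF gC(1)]])
        have "\<Delta> (Fract (F - C) 1) = \<Delta> (Fract F 1 - Fract C 1)" by simp
        also have "\<dots> = Fract c1 F' - Fract (g C) 1" using diff[OF loc_const loc_const] DF gC by simp
        also have "\<dots> = Fract (c1 - g C * F') F'" using F' by simp
        also have "\<dots> = Fract (- g C) F' * Fract (F' - \<Theta> C) 1"
        proof -
          have e3: "- g C * (F' - c1 div g C) = c1 - g C * F'"
            using gd by (simp add: right_diff_distrib)
          show ?thesis unfolding \<Theta>_def mult_fract e3 by simp
        qed
        finally have de: "\<Delta> (Fract (F - C) 1) = Fract (- g C) F' * Fract (F' - \<Theta> C) 1" .
        have g0: "- g C \<noteq> 0" using gC(1) by auto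
        have "- g C dvd F' ^ 0" using gC(1) by simp
        hence "unitR (localization F') (Fract (- g C) (F' ^ 1))"
          unfolding unit_loc[OF F'] using g0 by blast
        hence "unitR (localization F') (Fract (- g C) F')" by simp
        thus ?thesis using de by blast
      qed
      ultimately show ?thesis by (rule final_from[OF F F' Fu F'u r])
    qed
  qed
  ultimately show ?thesis by blast
qed


end
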